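(* Let $V$ be a real inner product space with norm $\lVert x\rVert=\sqrt{\langle x,x\rangle}$, and consider $n$ agents running the MidExtremes algorithm (described in the context) under an arbitrary communication pattern $G_1,G_2,\dots$ in which every communication graph $G_t$ is non-split, starting from arbitrary initial values $y_1(0),\dots,y_n(0)\in V$. Then for every round $t\ge 1$, \[ \Delta\big(y(t)\big)\le \sqrt{\tfrac{7}{8}}\;\Delta\big(y(t-1)\big), \] and for every $\varepsilon>0$ the convergence time satisfies $T(\varepsilon)\le \left\lceil \log_{\sqrt{8/7}} \frac{\Delta}{\varepsilon}\right\rceil$, where $\Delta=\Delta\big(y(0)\big)$ (i.e., $\Delta(y(\tau))\le\varepsilon$ for every integer $\tau\ge 0$ with $\tau\ge \lceil \log_{\sqrt{8/7}} (\Delta/\varepsilon)\rceil$). Moreover, if $V=\mathbb{R}$ (with the usual inner product), then $\Delta\big(y(t)\big)\le \tfrac12\,\Delta\big(y(t-1)\big)$ for every $t\ge1$, and $T(\varepsilon)\le \left\lceil \log_{2} \frac{\Delta}{\varepsilon}\right\rceil$.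
   Context: Dynamic network model: there are $n$ agents $1,\dots,n$ communicating in rounds $t=1,2,\dots$. In round $t$, communication is given by a directed graph $G_t$ on the vertex set $\{1,\dots,n\}$ containing every self-loop $(i,i)$; the message broadcast by $i$ in round $t$ is received by $j$ iff $(i,j)\in G_t$. A directed graph is non-split if every pair of nodes $i,j$ has a common in-neighbor $k$ (i.e., $(k,i)$ and $(k,j)$ are both edges). Each agent $i$ holds a value $y_i\in V$; $y_i(0)$ is its initial value and $y_i(t)$ its value at the end of round $t$; $y(t)=(y_1(t),\dots,y_n(t))$. MidExtremes algorithm: in round $t$ each agent $i$ broadcasts $y_i(t-1)$, lets $\mathrm{Rcv}_i(t)=\{y_j(t-1): (j,i)\in G_t\}$ be the set of received values, chooses a pair $(a,b)\in \mathrm{Rcv}_i(t)^2$ maximizing $\lVert a-b\rVert$ (ties broken arbitrarily), and sets $y_i(t)=(a+b)/2$. Notation: for $x=(x_1,\dots,x_n)\in V^n$, $\Delta(x)=\max_{i,j}\lVert x_i-x_j\rVert$. The convergence time of an execution is $T(\varepsilon)=\min\{t\ge0 : \forall \tau\ge t,\ \Delta(y(\tau))\le\varepsilon\}$. *)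

theory Defs
  imports "HOL-Analysis.Analysis"
begin

(* Agents are 0,...,n-1 (the paper's 1,...,n shifted). A communication graph is a set
   of directed edges (i,j) on {0..<n}. *)

definition comm_graph :: "nat \<Rightarrow> (nat \<times> nat) set \<Rightarrow> bool" where
  "comm_graph n E \<longleftrightarrow> E \<subseteq> {..<n} \<times> {..<n} \<and> (\<forall>i<n. (i, i) \<in> E)"

definition nonsplit :: "nat \<Rightarrow> (nat \<times> nat) set \<Rightarrow> bool" where
  "nonsplit n E \<longleftrightarrow> (\<forall>i<n. \<forall>j<n. \<exists>k<n. (k, i) \<in> E \<and> (k, j) \<in> E)"

definition rcv :: "nat \<Rightarrow> (nat \<times> nat) set \<Rightarrow> (nat \<Rightarrow> 'v) \<Rightarrow> nat \<Rightarrow> 'v set" where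
  "rcv n E x i = {x j | j. j < n \<and> (j, i) \<in> E}"

definition midext_round ::
  "nat \<Rightarrow> (nat \<times> nat) set \<Rightarrow> (nat \<Rightarrow> 'v::real_normed_vector) \<Rightarrow> (nat \<Rightarrow> 'v) \<Rightarrow> bool" where
  "midext_round n E x x' \<longleftrightarrow>
     (\<forall>i<n. \<exists>a\<in>rcv n E x i. \<exists>b\<in>rcv n E x i.
        (\<forall>c\<in>rcv n E x i. \<forall>d\<in>rcv n E x i. norm (c - d) \<le> norm (a - b)) \<and>
        x' i = (1/2) *\<^sub>R (a + b))"

definition midext_exec ::
  "nat \<Rightarrow> (nat \<Rightarrow> (nat \<times> nat) set) \<Rightarrow> (nat \<Rightarrow> nat \<Rightarrow> 'v::real_normed_vector) \<Rightarrow> bool" where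
  "midext_exec n G y \<longleftrightarrow> (\<forall>t\<ge>1. midext_round n (G t) (y (t - 1)) (y t))"

definition Delta :: "nat \<Rightarrow> (nat \<Rightarrow> 'v::real_normed_vector) \<Rightarrow> real" where
  "Delta n x = Max {norm (x i - x j) | i j. i < n \<and> j < n}"

end

theory Submission
  imports Defs
begin

lemma core_inner:
  fixes A B C E :: "'v::real_inner" and D :: real
  assumes "norm (A - C) \<le> D" "norm (A - E) \<le> D" "norm (B - C) \<le> D" "norm (B - E) \<le> D"
    "norm A \<le> norm (A - B)" "norm B \<le> norm (A - B)" "norm C \<le> norm (C - E)" "norm E \<le> norm (C - E)"
  shows "norm ((1/2) *\<^sub>R (A + B) - (1/2) *\<^sub>R (C + E)) \<le> sqrt (7/8) * D"
proof -
  have D0: "0 \<le> D" using assms(1) norm_ge_zero order_trans by blast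
  have sq: "\<And>u v. norm u \<le> norm v \<Longrightarrow> inner u u \<le> inner v v"
    by (metis norm_eq_sqrt_inner norm_ge_zero power_mono real_sqrt_le_iff power2_norm_eq_inner)
  have sqD: "\<And>u. norm u \<le> D \<Longrightarrow> inner u u \<le> D^2"
    by (metis norm_ge_zero power_mono power2_norm_eq_inner)
  have h1: "inner (A-C) (A-C) \<le> D^2" "inner (A-E) (A-E) \<le> D^2" "inner (B-C) (B-C) \<le> D^2" "inner (B-E) (B-E) \<le> D^2"
    using assms(1-4) sqD by auto
  have h2: "inner A A \<le> inner (A-B) (A-B)" "inner B B \<le> inner (A-B) (A-B)"
     "inner C C \<le> inner (C-E) (C-E)" "inner E E \<le> inner (C-E) (C-E)"
    using assms(5-8) sq by auto
  have h3: "0 \<le> inner (A+B+C+E) (A+B+C+E)" by simp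
  let ?m = "(1/2) *\<^sub>R (A + B) - (1/2) *\<^sub>R (C + E)"
  have "inner ?m ?m \<le> 6/7 * D^2"
    using h1 h2 h3
    by (simp add: inner_diff_left inner_diff_right inner_add_left inner_add_right inner_commute algebra_simps)
  moreover have "(0::real) \<le> D^2" by simp
  ultimately have "inner ?m ?m \<le> 7/8 * D^2" by linarith
  then have "(norm ?m)^2 \<le> (sqrt (7/8) * D)^2"
    by (simp add: power2_norm_eq_inner power_mult_distrib)
  then show ?thesis by (rule power2_le_imp_le) (use D0 in simp)
qed

lemma betw: fixes a b z :: real
  assumes "\<bar>z - a\<bar> \<le> \<bar>a - b\<bar>" "\<bar>z - b\<bar> \<le> \<bar>a - b\<bar>"
  shows "min a b \<le> z \<and> z \<le> max a b"
  using assms by (cases "a \<le> b"; cases "z \<le> a"; cases "z \<le> b") (simp_all add: abs_if min_def max_def split: if_splits)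

lemma core_real:
  fixes a b c d z D :: real
  assumes "\<bar>a - c\<bar> \<le> D" "\<bar>a - d\<bar> \<le> D" "\<bar>b - c\<bar> \<le> D" "\<bar>b - d\<bar> \<le> D"
    "\<bar>z - a\<bar> \<le> \<bar>a - b\<bar>" "\<bar>z - b\<bar> \<le> \<bar>a - b\<bar>" "\<bar>z - c\<bar> \<le> \<bar>c - d\<bar>" "\<bar>z - d\<bar> \<le> \<bar>c - d\<bar>"
  shows "\<bar>(1/2) * (a + b) - (1/2) * (c + d)\<bar> \<le> 1/2 * D"
proof -
  have 1: "min a b \<le> z \<and> z \<le> max a b" using assms(5,6) by (rule betw)
  have 2: "min c d \<le> z \<and> z \<le> max c d" using assms(7,8) by (rule betw)
  have 3: "a - c \<le> D" "a - d \<le> D" "b - c \<le> D" "b - d \<le> D"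
          "c - a \<le> D" "d - a \<le> D" "c - b \<le> D" "d - b \<le> D" using assms(1-4) by (simp_all add: abs_le_iff)
  have 4: "a + b - (c + d) \<le> D \<and> c + d - (a + b) \<le> D"
  proof (cases "a \<le> b")
    case True
    then show ?thesis using 1 2 3 by (cases "c \<le> d") (auto simp: min_def max_def)
  next
    case False
    then show ?thesis using 1 2 3 by (cases "c \<le> d") (auto simp: min_def max_def)
  qed
  have e: "(1/2) * (a + b) - (1/2) * (c + d) = (1/2) * (a + b - (c + d))" by (simp only: right_diff_distrib)
  have 5: "\<bar>a + b - (c + d)\<bar> \<le> D" using 4 by (intro abs_leI) auto
  show ?thesis unfolding e abs_mult using 5 by simp
qed

lemma Delta_facts:
  fixes x :: "nat \<Rightarrow> 'v::real_normed_vector"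
  assumes "n \<ge> 1"
  shows "\<And>i j. i < n \<Longrightarrow> j < n \<Longrightarrow> norm (x i - x j) \<le> Delta n x"
    and "(\<And>i j. i < n \<Longrightarrow> j < n \<Longrightarrow> norm (x i - x j) \<le> B) \<Longrightarrow> Delta n x \<le> B"
    and "0 \<le> Delta n x"
proof -
  let ?S = "{norm (x i - x j) | i j. i < n \<and> j < n}"
  have fin: "finite ?S"
  proof -
    have "?S = (\<lambda>(i,j). norm (x i - x j)) ` ({..<n} \<times> {..<n})" by auto
    then show ?thesis by simp
  qed
  have n0: "0 < n" using assms by simp
  have ne: "norm (x 0 - x 0) \<in> ?S" using n0 by blast
  show le: "\<And>i j. i < n \<Longrightarrow> j < n \<Longrightarrow> norm (x i - x j) \<le> Delta n x"
    unfolding Delta_def using fin by (intro Max_ge) auto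
  show "(\<And>i j. i < n \<Longrightarrow> j < n \<Longrightarrow> norm (x i - x j) \<le> B) \<Longrightarrow> Delta n x \<le> B"
    unfolding Delta_def using fin ne by (subst Max_le_iff) auto
  show "0 \<le> Delta n x" using le[of 0 0] assms by simp
qed

lemma rcv_mem: "u \<in> rcv n E x l \<Longrightarrow> \<exists>p<n. u = x p"
  unfolding rcv_def by blast

lemma round_bound:
  fixes x x' :: "nat \<Rightarrow> 'v::real_normed_vector"
  assumes "midext_round n E x x'" "nonsplit n E" "n \<ge> 1"
    and core: "\<And>a b c d z :: 'v. norm (a - c) \<le> Delta n x \<Longrightarrow> norm (a - d) \<le> Delta n x \<Longrightarrow>
        norm (b - c) \<le> Delta n x \<Longrightarrow> norm (b - d) \<le> Delta n x \<Longrightarrow>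
        norm (z - a) \<le> norm (a - b) \<Longrightarrow> norm (z - b) \<le> norm (a - b) \<Longrightarrow>
        norm (z - c) \<le> norm (c - d) \<Longrightarrow> norm (z - d) \<le> norm (c - d) \<Longrightarrow>
        norm ((1/2) *\<^sub>R (a + b) - (1/2) *\<^sub>R (c + d)) \<le> K * Delta n x"
  shows "Delta n x' \<le> K * Delta n x"
proof (rule Delta_facts(2)[OF assms(3)])
  fix i j assume ij: "i < n" "j < n"
  obtain k where k: "k < n" "(k, i) \<in> E" "(k, j) \<in> E"
    using assms(2) ij unfolding nonsplit_def by blast
  have zi: "x k \<in> rcv n E x i" and zj: "x k \<in> rcv n E x j"
    using k unfolding rcv_def by auto
  have inD: "norm (u - v) \<le> Delta n x" if uu: "u \<in> rcv n E x l" and vv: "v \<in> rcv n E x l'" for u v l l'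
  proof -
    obtain p where p: "p < n" "u = x p" using rcv_mem[OF uu] by blast
    obtain q where q: "q < n" "v = x q" using rcv_mem[OF vv] by blast
    from p q show ?thesis using Delta_facts(1)[OF assms(3)] by simp
  qed
  obtain a b where ab: "a \<in> rcv n E x i" "b \<in> rcv n E x i"
      "\<forall>c\<in>rcv n E x i. \<forall>d\<in>rcv n E x i. norm (c - d) \<le> norm (a - b)"
      "x' i = (1/2) *\<^sub>R (a + b)"
    using assms(1) ij unfolding midext_round_def by blast
  obtain c d where cd: "c \<in> rcv n E x j" "d \<in> rcv n E x j"
      "\<forall>u\<in>rcv n E x j. \<forall>v\<in>rcv n E x j. norm (u - v) \<le> norm (c - d)"
      "x' j = (1/2) *\<^sub>R (c + d)"
    using assms(1) ij unfolding midext_round_def by blast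
  show "norm (x' i - x' j) \<le> K * Delta n x"
    unfolding ab(4) cd(4)
  proof (rule core)
    show "norm (a - c) \<le> Delta n x" by (rule inD[OF ab(1) cd(1)])
    show "norm (a - d) \<le> Delta n x" by (rule inD[OF ab(1) cd(2)])
    show "norm (b - c) \<le> Delta n x" by (rule inD[OF ab(2) cd(1)])
    show "norm (b - d) \<le> Delta n x" by (rule inD[OF ab(2) cd(2)])
    show "norm (x k - a) \<le> norm (a - b)" using ab(3) zi ab(1) by blast
    show "norm (x k - b) \<le> norm (a - b)" using ab(3) zi ab(2) by blast
    show "norm (x k - c) \<le> norm (c - d)" using cd(3) zj cd(1) by blast
    show "norm (x k - d) \<le> norm (c - d)" using cd(3) zj cd(2) by blast
  qed
qed

lemma conv:
  fixes Del :: "nat \<Rightarrow> real" and b :: real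
  assumes b: "b > 1" and step: "\<forall>t\<ge>1. Del t \<le> (1/b) * Del (t - 1)"
    and nn: "\<And>t. 0 \<le> Del t" and eps: "\<epsilon> > 0"
    and tau: "of_nat \<tau> \<ge> \<lceil>log b (Del 0 / \<epsilon>)\<rceil>"
  shows "Del \<tau> \<le> \<epsilon>"
proof -
  have pw: "Del t \<le> (1/b)^t * Del 0" for t
  proof (induction t)
    case 0 then show ?case by simp
  next
    case (Suc t)
    have "Del (Suc t) \<le> (1/b) * Del t" using step by fastforce
    also have "\<dots> \<le> (1/b) * ((1/b)^t * Del 0)"
      using Suc b by (intro mult_left_mono) auto
    finally show ?case by simp
  qed
  show ?thesis
  proof (cases "Del 0 = 0")
    case True
    then show ?thesis using pw[of \<tau>] eps by simp
  next
    case False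
    then have D0: "Del 0 > 0" using nn[of 0] by simp
    have c1: "real_of_int \<lceil>log b (Del 0 / \<epsilon>)\<rceil> \<le> real_of_int (int \<tau>)"
      using tau by (simp only: of_int_le_iff)
    have "log b (Del 0 / \<epsilon>) \<le> real \<tau>"
      by (rule order_trans[OF le_of_int_ceiling]) (use c1 in simp)
    then have "b powr log b (Del 0 / \<epsilon>) \<le> b powr real \<tau>"
      using b by (intro powr_mono) auto
    moreover have "b powr log b (Del 0 / \<epsilon>) = Del 0 / \<epsilon>"
      using b D0 eps by (intro powr_log_cancel) auto
    moreover have "b powr real \<tau> = b ^ \<tau>" using b by (intro powr_realpow) auto
    ultimately have "Del 0 / \<epsilon> \<le> b ^ \<tau>" by simp
    then have c2: "Del 0 \<le> \<epsilon> * b ^ \<tau>" using eps by (simp add: divide_le_eq mult.commute)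
    have bp: "b ^ \<tau> > 0" using b by simp
    have "(1/b)^\<tau> * Del 0 = Del 0 / b ^ \<tau>" by (simp add: power_one_over)
    also have "\<dots> \<le> \<epsilon>" using c2 bp by (simp add: divide_le_eq mult.commute)
    finally have "(1/b)^\<tau> * Del 0 \<le> \<epsilon>" .
    then show ?thesis using pw[of \<tau>] by linarith
  qed
qed

lemma core_inner_z:
  fixes a b c d z :: "'v::real_inner" and D :: real
  assumes "norm (a - c) \<le> D" "norm (a - d) \<le> D" "norm (b - c) \<le> D" "norm (b - d) \<le> D"
    "norm (z - a) \<le> norm (a - b)" "norm (z - b) \<le> norm (a - b)"
    "norm (z - c) \<le> norm (c - d)" "norm (z - d) \<le> norm (c - d)"
  shows "norm ((1/2) *\<^sub>R (a + b) - (1/2) *\<^sub>R (c + d)) \<le> sqrt (7/8) * D"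
proof -
  have e: "(1/2) *\<^sub>R (a + b) - (1/2) *\<^sub>R (c + d) =
    (1/2) *\<^sub>R ((a - z) + (b - z)) - (1/2) *\<^sub>R ((c - z) + (d - z))"
    by (simp add: scaleR_add_right scaleR_diff_right)
  have n1: "norm (a - z) = norm (z - a)" "norm (b - z) = norm (z - b)"
    "norm (c - z) = norm (z - c)" "norm (d - z) = norm (z - d)" by (simp_all add: norm_minus_commute)
  have d: "\<And>p q :: 'v. (p - z) - (q - z) = p - q" by simp
  show ?thesis unfolding e
  proof (rule core_inner)
    show "norm ((a - z) - (c - z)) \<le> D" unfolding d by (rule assms(1))
    show "norm ((a - z) - (d - z)) \<le> D" unfolding d by (rule assms(2))
    show "norm ((b - z) - (c - z)) \<le> D" unfolding d by (rule assms(3))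
    show "norm ((b - z) - (d - z)) \<le> D" unfolding d by (rule assms(4))
    show "norm (a - z) \<le> norm ((a - z) - (b - z))" unfolding d n1 by (rule assms(5))
    show "norm (b - z) \<le> norm ((a - z) - (b - z))" unfolding d n1 by (rule assms(6))
    show "norm (c - z) \<le> norm ((c - z) - (d - z))" unfolding d n1 by (rule assms(7))
    show "norm (d - z) \<le> norm ((c - z) - (d - z))" unfolding d n1 by (rule assms(8))
  qed
qed


lemma core_real_z:
  fixes a b c d z D :: real
  assumes "norm (a - c) \<le> D" "norm (a - d) \<le> D" "norm (b - c) \<le> D" "norm (b - d) \<le> D"
    "norm (z - a) \<le> norm (a - b)" "norm (z - b) \<le> norm (a - b)"
    "norm (z - c) \<le> norm (c - d)" "norm (z - d) \<le> norm (c - d)"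
  shows "norm ((1/2) *\<^sub>R (a + b) - (1/2) *\<^sub>R (c + d)) \<le> 1/2 * D"
  using core_real[of a c D d b z] assms by simp

lemma part_inner:
  fixes y :: "nat \<Rightarrow> nat \<Rightarrow> 'v::real_inner"
  assumes "n \<ge> 1" and exa: "\<forall>t\<ge>1. nonsplit n (G t)" and y: "midext_exec n G y"
  shows "(\<forall>t\<ge>1. Delta n (y t) \<le> sqrt (7/8) * Delta n (y (t - 1))) \<and>
            (\<forall>\<epsilon>>0. \<forall>\<tau>::nat.
               of_nat \<tau> \<ge> \<lceil>log (sqrt (8/7)) (Delta n (y 0) / \<epsilon>)\<rceil> \<longrightarrow> Delta n (y \<tau>) \<le> \<epsilon>)"
proof -
  have ex: "\<And>t. t \<ge> 1 \<Longrightarrow> nonsplit n (G t)" using exa by blast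
  have st: "\<forall>t\<ge>1. Delta n (y t) \<le> sqrt (7/8) * Delta n (y (t - 1))"
  proof (intro allI impI)
    fix t :: nat assume t: "t \<ge> 1"
    have r: "midext_round n (G t) (y (t - 1)) (y t)" using y t unfolding midext_exec_def by blast
    show "Delta n (y t) \<le> sqrt (7/8) * Delta n (y (t - 1))"
      by (rule round_bound[OF r ex[OF t] assms(1)], rule core_inner_z)
  qed
  moreover have "\<forall>\<epsilon>>0. \<forall>\<tau>::nat.
               of_nat \<tau> \<ge> \<lceil>log (sqrt (8/7)) (Delta n (y 0) / \<epsilon>)\<rceil> \<longrightarrow> Delta n (y \<tau>) \<le> \<epsilon>"
  proof (intro allI impI)
  fix \<epsilon> :: real and \<tau> :: nat
  assume e: "\<epsilon> > 0" and tau: "of_nat \<tau> \<ge> \<lceil>log (sqrt (8/7)) (Delta n (y 0) / \<epsilon>)\<rceil>"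
  have eq: "sqrt (7/8) = 1 / sqrt (8/7)" by (simp add: real_sqrt_divide)
  have st': "\<forall>t\<ge>1. Delta n (y t) \<le> (1 / sqrt (8/7)) * Delta n (y (t - 1))" using st eq by simp
  have b: "sqrt (8/7) > (1::real)" by simp
  show "Delta n (y \<tau>) \<le> \<epsilon>"
    by (rule conv[OF b st' Delta_facts(3)[OF assms(1)] e tau])
  qed
  ultimately show ?thesis by blast
qed

lemma part_real:
  fixes y :: "nat \<Rightarrow> nat \<Rightarrow> real"
  assumes "n \<ge> 1" and exa: "\<forall>t\<ge>1. nonsplit n (G t)" and y: "midext_exec n G y"
  shows "(\<forall>t\<ge>1. Delta n (y t) \<le> (1/2) * Delta n (y (t - 1))) \<and>
            (\<forall>\<epsilon>>0. \<forall>\<tau>::nat.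
               of_nat \<tau> \<ge> \<lceil>log 2 (Delta n (y 0) / \<epsilon>)\<rceil> \<longrightarrow> Delta n (y \<tau>) \<le> \<epsilon>)"
proof -
  have ex: "\<And>t. t \<ge> 1 \<Longrightarrow> nonsplit n (G t)" using exa by blast
  have st: "\<forall>t\<ge>1. Delta n (y t) \<le> (1/2) * Delta n (y (t - 1))"
  proof (intro allI impI)
    fix t :: nat assume t: "t \<ge> 1"
    have r: "midext_round n (G t) (y (t - 1)) (y t)" using y t unfolding midext_exec_def by blast
    show "Delta n (y t) \<le> (1/2) * Delta n (y (t - 1))"
      by (rule round_bound[OF r ex[OF t] assms(1)], rule core_real_z)
  qed
  moreover have "\<forall>\<epsilon>>0. \<forall>\<tau>::nat.
               of_nat \<tau> \<ge> \<lceil>log 2 (Delta n (y 0) / \<epsilon>)\<rceil> \<longrightarrow> Delta n (y \<tau>) \<le> \<epsilon>"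
  proof (intro allI impI)
  fix \<epsilon> :: real and \<tau> :: nat
  assume e: "\<epsilon> > 0" and tau: "of_nat \<tau> \<ge> \<lceil>log 2 (Delta n (y 0) / \<epsilon>)\<rceil>"
  have b: "2 > (1::real)" by simp
  show "Delta n (y \<tau>) \<le> \<epsilon>"
    by (rule conv[OF b st Delta_facts(3)[OF assms(1)] e tau])
  qed
  ultimately show ?thesis by blast
qed

theorem theorem1:
  fixes n :: nat and G :: "nat \<Rightarrow> (nat \<times> nat) set"
  assumes "n \<ge> 1"
    and "\<forall>t\<ge>1. comm_graph n (G t) \<and> nonsplit n (G t)"
  shows "(\<forall>y :: nat \<Rightarrow> nat \<Rightarrow> 'v::real_inner. midext_exec n G y \<longrightarrow>
            (\<forall>t\<ge>1. Delta n (y t) \<le> sqrt (7/8) * Delta n (y (t - 1))) \<and>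
            (\<forall>\<epsilon>>0. \<forall>\<tau>::nat.
               of_nat \<tau> \<ge> \<lceil>log (sqrt (8/7)) (Delta n (y 0) / \<epsilon>)\<rceil> \<longrightarrow> Delta n (y \<tau>) \<le> \<epsilon>))
       \<and> (\<forall>y :: nat \<Rightarrow> nat \<Rightarrow> real. midext_exec n G y \<longrightarrow>
            (\<forall>t\<ge>1. Delta n (y t) \<le> (1/2) * Delta n (y (t - 1))) \<and>
            (\<forall>\<epsilon>>0. \<forall>\<tau>::nat.
               of_nat \<tau> \<ge> \<lceil>log 2 (Delta n (y 0) / \<epsilon>)\<rceil> \<longrightarrow> Delta n (y \<tau>) \<le> \<epsilon>))"
proof -
  have ex: "\<forall>t\<ge>1. nonsplit n (G t)" using assms(2) by blast
  show ?thesis using part_inner[OF assms(1) ex] part_real[OF assms(1) ex] by blast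
qed

end
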